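(* Let $A$ be a Banach algebra and let $(C^*_{cont}(A;A),b)$ be its continuous Hochschild cochain complex. Suppose there are continuous linear maps $h:C^2_{cont}(A;A)\to C^1_{cont}(A;A)$ and $g:C^3_{cont}(A;A)\to C^2_{cont}(A;A)$ with $bh+gb=1$ on $C^2_{cont}(A;A)$. Then every continuous deformation of $A$ which is of class $C^1$ in $t$ is equivalent to the trivial one: there exist $\epsilon>0$ and continuous algebra isomorphisms $h_t$ between $(A,\cdot)$ and $(A,\odot_t)$, $|t|<\epsilon$, of class $C^1$ in $t$, with $h_0=\mathrm{Id}$.
   Context: Continuity of multilinear maps is joint continuity (projective tensor product): $C^k_{cont}(A;A)$ is the Banach space of bounded $k$-linear maps $A^k\to A$, with Hochschild differential $b(\alpha)(a_0,\dots,a_k)=a_0\alpha(a_1,\dots,a_k)+\sum_{i=1}^k(-1)^i\alpha(a_0,\dots,a_{i-1}a_i,\dots,a_k)+(-1)^{k+1}\alpha(a_0,\dots,a_{k-1})a_k$. A continuous deformation of $A$ of class $C^1$ in $t$ is a family $\odot_t$, $t$ in an open interval containing $0$, of associative multiplications on $A$, each bounded bilinear, with $\odot_0$ the original multiplication, such that $t\mapsto\odot_t\in C^2_{cont}(A;A)$ is $C^1$. All maps are linear unless stated otherwise. *)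

theory Defs
  imports "HOL-Analysis.Analysis"
begin

text \<open>A bounded k-linear map A^k -> A is represented in curried form as an element of
  the Banach space  'a =>L ... =>L 'a  (isometric to the space of jointly bounded
  k-linear maps with the usual sup norm).\<close>

type_synonym 'a cochain1 = "'a \<Rightarrow>\<^sub>L 'a"
type_synonym 'a cochain2 = "'a \<Rightarrow>\<^sub>L 'a \<Rightarrow>\<^sub>L 'a"
type_synonym 'a cochain3 = "'a \<Rightarrow>\<^sub>L 'a \<Rightarrow>\<^sub>L 'a \<Rightarrow>\<^sub>L 'a"

definition hoch_b1 :: "('a::{real_normed_algebra,banach}) cochain1 \<Rightarrow> 'a cochain2" where
  "hoch_b1 \<alpha> = Blinfun (\<lambda>a0. Blinfun (\<lambda>a1.
      a0 * blinfun_apply \<alpha> a1 - blinfun_apply \<alpha> (a0 * a1) + blinfun_apply \<alpha> a0 * a1))"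

definition hoch_b2 :: "('a::{real_normed_algebra,banach}) cochain2 \<Rightarrow> 'a cochain3" where
  "hoch_b2 \<alpha> = Blinfun (\<lambda>a0. Blinfun (\<lambda>a1. Blinfun (\<lambda>a2.
      a0 * (\<alpha> a1 a2) - \<alpha> (a0 * a1) a2 + \<alpha> a0 (a1 * a2) - (\<alpha> a0 a1) * a2)))"

definition C1_deformation :: "real set \<Rightarrow> (real \<Rightarrow> ('a::{real_normed_algebra,banach}) cochain2) \<Rightarrow> bool" where
  "C1_deformation I m \<longleftrightarrow>
     open I \<and> is_interval I \<and> 0 \<in> I \<and>
     (\<forall>t\<in>I. \<forall>x y z. m t (m t x y) z = m t x (m t y z)) \<and>
     (\<forall>x y. m 0 x y = x * y) \<and>
     m C1_differentiable_on I"

end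

theory Submission
  imports Defs "HOL-Analysis.Analysis"
begin

definition c2 :: "('a::real_normed_vector \<Rightarrow> 'b::real_normed_vector \<Rightarrow> 'c::real_normed_vector) \<Rightarrow> 'a \<Rightarrow>\<^sub>L 'b \<Rightarrow>\<^sub>L 'c" where
  "c2 f = Blinfun (\<lambda>x. Blinfun (f x))"

lemma c2_apply:
  assumes "bounded_bilinear f"
  shows "blinfun_apply (blinfun_apply (c2 f) x) y = f x y"
proof -
  interpret bounded_bilinear f by fact
  have bl: "bounded_linear (\<lambda>x. Blinfun (f x))"
    using bounded_linear_prod_right by (simp add: prod_right_def map_fun_def o_def)
  have "bounded_linear (f x)" for x by (rule bounded_linear_right)
  then show ?thesis unfolding c2_def using bl by (simp add: bounded_linear_Blinfun_apply)
qed

lemma c2_norm: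
  assumes "bounded_bilinear f" "0 \<le> K" "\<And>x y. norm (f x y) \<le> K * norm x * norm y"
  shows "norm (c2 f) \<le> K"
proof (rule norm_blinfun_bound[OF assms(2)])
  fix x
  show "norm (blinfun_apply (c2 f) x) \<le> K * norm x"
    apply (rule norm_blinfun_bound)
    using assms by (auto simp: c2_apply)
qed

lemma bb_intro:
  fixes f :: "'a::real_normed_vector \<Rightarrow> 'b::real_normed_vector \<Rightarrow> 'c::real_normed_vector"
  assumes "\<And>a a' b. f (a + a') b = f a b + f a' b"
    "\<And>a b b'. f a (b + b') = f a b + f a b'"
    "\<And>r a b. f (r *\<^sub>R a) b = r *\<^sub>R f a b"
    "\<And>r a b. f a (r *\<^sub>R b) = r *\<^sub>R f a b"
    "\<And>a b. norm (f a b) \<le> K * norm a * norm b"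
  shows "bounded_bilinear f"
  apply (rule bounded_bilinear.intro)
  using assms by (auto intro!: exI[of _ K] simp: ac_simps)

definition c3 :: "('a::real_normed_vector \<Rightarrow> 'b::real_normed_vector \<Rightarrow> 'c::real_normed_vector \<Rightarrow> 'd::real_normed_vector) \<Rightarrow> 'a \<Rightarrow>\<^sub>L 'b \<Rightarrow>\<^sub>L 'c \<Rightarrow>\<^sub>L 'd" where
  "c3 f = Blinfun (\<lambda>x. c2 (f x))"

lemma c3_props:
  assumes bb: "\<And>x. bounded_bilinear (f x)"
    and addx: "\<And>x x' y z. f (x + x') y z = f x y z + f x' y z"
    and sc: "\<And>r x y z. f (r *\<^sub>R x) y z = r *\<^sub>R f x y z"
    and bd: "\<And>x y z. norm (f x y z) \<le> K * norm x * norm y * norm z"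
    and K: "0 \<le> K"
  shows "blinfun_apply (blinfun_apply (blinfun_apply (c3 f) x) y) z = f x y z"
    and "norm (c3 f) \<le> K"
proof -
  have nb: "norm (c2 (f x)) \<le> K * norm x" for x
    by (rule c2_norm[OF bb]) (use K bd in auto)
  have bl: "bounded_linear (\<lambda>x. c2 (f x))"
  proof (rule bounded_linear_intro[where K=K])
    show "c2 (f (x + y)) = c2 (f x) + c2 (f y)" for x y
      by (auto intro!: blinfun_eqI simp: c2_apply[OF bb] addx blinfun.add_left)
    show "c2 (f (r *\<^sub>R x)) = r *\<^sub>R c2 (f x)" for r x
      by (auto intro!: blinfun_eqI simp: c2_apply[OF bb] sc scaleR_blinfun.rep_eq)
    show "norm (c2 (f x)) \<le> norm x * K" for x using nb[of x] by (simp add: ac_simps)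
  qed
  show "blinfun_apply (blinfun_apply (blinfun_apply (c3 f) x) y) z = f x y z"
    unfolding c3_def using bl by (simp add: bounded_linear_Blinfun_apply c2_apply[OF bb])
  show "norm (c3 f) \<le> K"
    apply (rule norm_blinfun_bound[OF K])
    unfolding c3_def using bl nb by (simp add: bounded_linear_Blinfun_apply)
qed

definition b1f :: "('a::real_normed_algebra) cochain2 \<Rightarrow> 'a cochain1 \<Rightarrow> 'a \<Rightarrow> 'a \<Rightarrow> 'a" where
  "b1f \<mu> \<alpha> x y = \<mu> x (\<alpha> y) - \<alpha> (\<mu> x y) + \<mu> (\<alpha> x) y"

definition b2f :: "('a::real_normed_algebra) cochain2 \<Rightarrow> 'a cochain2 \<Rightarrow> 'a \<Rightarrow> 'a \<Rightarrow> 'a \<Rightarrow> 'a" where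
  "b2f \<mu> \<beta> x y z = \<mu> x (\<beta> y z) - \<beta> (\<mu> x y) z + \<beta> x (\<mu> y z) - \<mu> (\<beta> x y) z"

definition b1op :: "('a::real_normed_algebra) cochain2 \<Rightarrow> 'a cochain1 \<Rightarrow> 'a cochain2" where
  "b1op \<mu> \<alpha> = c2 (b1f \<mu> \<alpha>)"

definition b2op :: "('a::real_normed_algebra) cochain2 \<Rightarrow> 'a cochain2 \<Rightarrow> 'a cochain3" where
  "b2op \<mu> \<beta> = c3 (b2f \<mu> \<beta>)"

lemma nb2: "norm (blinfun_apply (blinfun_apply \<mu> x) y) \<le> norm \<mu> * norm x * norm y"
  by (metis (no_types, lifting) mult.commute mult_left_mono norm_blinfun norm_ge_zero order_trans)

lemma nb_comp: "norm (blinfun_apply (blinfun_apply \<mu> x) (blinfun_apply \<alpha> y)) \<le> norm \<mu> * norm \<alpha> * norm x * norm y"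
proof -
  have "norm (blinfun_apply (blinfun_apply \<mu> x) (blinfun_apply \<alpha> y)) \<le> norm \<mu> * norm x * norm (blinfun_apply \<alpha> y)"
    by (rule nb2)
  also have "\<dots> \<le> norm \<mu> * norm x * (norm \<alpha> * norm y)"
    by (intro mult_left_mono norm_blinfun) auto
  finally show ?thesis by (simp add: ac_simps)
qed

lemma nb_comp2: "norm (blinfun_apply \<alpha> (blinfun_apply (blinfun_apply \<mu> x) y)) \<le> norm \<mu> * norm \<alpha> * norm x * norm y"
proof -
  have "norm (blinfun_apply \<alpha> (blinfun_apply (blinfun_apply \<mu> x) y)) \<le> norm \<alpha> * norm (blinfun_apply (blinfun_apply \<mu> x) y)"
    by (rule norm_blinfun)
  also have "\<dots> \<le> norm \<alpha> * (norm \<mu> * norm x * norm y)"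
    by (intro mult_left_mono nb2) auto
  finally show ?thesis by (simp add: ac_simps)
qed

lemma nb_comp3: "norm (blinfun_apply (blinfun_apply \<mu> (blinfun_apply \<alpha> x)) y) \<le> norm \<mu> * norm \<alpha> * norm x * norm y"
proof -
  have "norm (blinfun_apply (blinfun_apply \<mu> (blinfun_apply \<alpha> x)) y) \<le> norm \<mu> * norm (blinfun_apply \<alpha> x) * norm y"
    by (rule nb2)
  also have "\<dots> \<le> norm \<mu> * (norm \<alpha> * norm x) * norm y"
    by (intro mult_left_mono mult_right_mono norm_blinfun) auto
  finally show ?thesis by (simp add: ac_simps)
qed

lemma b1f_bound: "norm (b1f \<mu> \<alpha> x y) \<le> (3 * norm \<mu> * norm \<alpha>) * norm x * norm y"
proof -
  note 1 = nb_comp[of \<mu> x \<alpha> y] and 2 = nb_comp2[of \<alpha> \<mu> x y] and 3 = nb_comp3[of \<mu> \<alpha> x y]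
  have "norm (b1f \<mu> \<alpha> x y) \<le> norm (\<mu> x (\<alpha> y)) + norm (\<alpha> (\<mu> x y)) + norm (\<mu> (\<alpha> x) y)"
    unfolding b1f_def by (meson norm_triangle_ineq norm_triangle_ineq4 add_mono order_trans order_refl)
  then show ?thesis using 1 2 3 by linarith
qed

lemma b1f_bb: "bounded_bilinear (b1f \<mu> \<alpha>)"
  by (rule bb_intro[OF _ _ _ _ b1f_bound])
     (auto simp: b1f_def blinfun.bilinear_simps algebra_simps)

lemma nb3: "norm (blinfun_apply (blinfun_apply (blinfun_apply \<mu> x) y) z) \<le> norm \<mu> * norm x * norm y * norm z"
proof -
  have "norm (blinfun_apply (blinfun_apply (blinfun_apply \<mu> x) y) z) \<le> norm (blinfun_apply (blinfun_apply \<mu> x) y) * norm z"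
    by (rule norm_blinfun)
  also have "\<dots> \<le> (norm \<mu> * norm x * norm y) * norm z"
    by (intro mult_right_mono nb2) auto
  finally show ?thesis .
qed

lemma b2f_bound: "norm (b2f \<mu> \<beta> x y z) \<le> (4 * norm \<mu> * norm \<beta>) * norm x * norm y * norm z"
proof -
  have 1: "norm (\<mu> x (\<beta> y z)) \<le> norm \<mu> * norm \<beta> * norm x * norm y * norm z"
  proof -
    have "norm (\<mu> x (\<beta> y z)) \<le> norm \<mu> * norm x * norm (\<beta> y z)" by (rule nb2)
    also have "\<dots> \<le> norm \<mu> * norm x * (norm \<beta> * norm y * norm z)"
      by (intro mult_left_mono nb2) auto
    finally show ?thesis by (simp add: ac_simps)
  qed
  have 2: "norm (\<beta> (\<mu> x y) z) \<le> norm \<mu> * norm \<beta> * norm x * norm y * norm z"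
  proof -
    have "norm (\<beta> (\<mu> x y) z) \<le> norm \<beta> * norm (\<mu> x y) * norm z" by (rule nb2)
    also have "\<dots> \<le> norm \<beta> * (norm \<mu> * norm x * norm y) * norm z"
      by (intro mult_left_mono mult_right_mono nb2) auto
    finally show ?thesis by (simp add: ac_simps)
  qed
  have 3: "norm (\<beta> x (\<mu> y z)) \<le> norm \<mu> * norm \<beta> * norm x * norm y * norm z"
  proof -
    have "norm (\<beta> x (\<mu> y z)) \<le> norm \<beta> * norm x * norm (\<mu> y z)" by (rule nb2)
    also have "\<dots> \<le> norm \<beta> * norm x * (norm \<mu> * norm y * norm z)"
      by (intro mult_left_mono nb2) auto
    finally show ?thesis by (simp add: ac_simps)
  qed
  have 4: "norm (\<mu> (\<beta> x y) z) \<le> norm \<mu> * norm \<beta> * norm x * norm y * norm z"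
  proof -
    have "norm (\<mu> (\<beta> x y) z) \<le> norm \<mu> * norm (\<beta> x y) * norm z" by (rule nb2)
    also have "\<dots> \<le> norm \<mu> * (norm \<beta> * norm x * norm y) * norm z"
      by (intro mult_left_mono mult_right_mono nb2) auto
    finally show ?thesis by (simp add: ac_simps)
  qed
  have "norm (b2f \<mu> \<beta> x y z) \<le> norm (\<mu> x (\<beta> y z)) + norm (\<beta> (\<mu> x y) z) + norm (\<beta> x (\<mu> y z)) + norm (\<mu> (\<beta> x y) z)"
    unfolding b2f_def by (meson norm_triangle_ineq norm_triangle_ineq4 add_mono order_trans order_refl)
  then show ?thesis using 1 2 3 4 by linarith
qed

lemma b2f_bb: "bounded_bilinear (b2f \<mu> \<beta> x)"
proof (rule bb_intro[where K="4 * norm \<mu> * norm \<beta> * norm x"])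
  show "norm (b2f \<mu> \<beta> x a b) \<le> 4 * norm \<mu> * norm \<beta> * norm x * norm a * norm b" for a b
    using b2f_bound[of \<mu> \<beta> x a b] by (simp add: ac_simps)
qed (auto simp: b2f_def blinfun.bilinear_simps algebra_simps)

lemma b2f_props: "b2f \<mu> \<beta> (x + x') y z = b2f \<mu> \<beta> x y z + b2f \<mu> \<beta> x' y z"
   "b2f \<mu> \<beta> (r *\<^sub>R x) y z = r *\<^sub>R b2f \<mu> \<beta> x y z"
  by (auto simp: b2f_def blinfun.bilinear_simps algebra_simps)

lemma b1op_apply[simp]: "blinfun_apply (blinfun_apply (b1op \<mu> \<alpha>) x) y = b1f \<mu> \<alpha> x y"
  unfolding b1op_def by (rule c2_apply[OF b1f_bb])

lemma b2op_apply[simp]: "blinfun_apply (blinfun_apply (blinfun_apply (b2op \<mu> \<beta>) x) y) z = b2f \<mu> \<beta> x y z"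
  unfolding b2op_def
  by (rule c3_props(1)[OF b2f_bb b2f_props b2f_bound]) simp

lemma b1op_norm: "norm (b1op \<mu> \<alpha>) \<le> 3 * norm \<mu> * norm \<alpha>"
  unfolding b1op_def by (rule c2_norm[OF b1f_bb _ b1f_bound]) simp

lemma b2op_norm: "norm (b2op \<mu> \<beta>) \<le> 4 * norm \<mu> * norm \<beta>"
  unfolding b2op_def by (rule c3_props(2)[OF b2f_bb b2f_props b2f_bound]) simp

lemma b1op_diff_mu: "b1op (\<mu> - \<nu>) \<alpha> = b1op \<mu> \<alpha> - b1op \<nu> \<alpha>"
  by (auto intro!: blinfun_eqI simp: b1f_def blinfun.bilinear_simps algebra_simps)

lemma b2op_diff_mu: "b2op (\<mu> - \<nu>) \<alpha> = b2op \<mu> \<alpha> - b2op \<nu> \<alpha>"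
  by (auto intro!: blinfun_eqI simp: b2f_def blinfun.bilinear_simps algebra_simps)

lemma b1op_linear: "bounded_linear (b1op \<mu>)"
proof (rule bounded_linear_intro[where K="3 * norm \<mu>"])
  show "b1op \<mu> (x + y) = b1op \<mu> x + b1op \<mu> y" for x y
    by (auto intro!: blinfun_eqI simp: b1f_def blinfun.bilinear_simps algebra_simps)
  show "b1op \<mu> (r *\<^sub>R x) = r *\<^sub>R b1op \<mu> x" for r x
    by (auto intro!: blinfun_eqI simp: b1f_def blinfun.bilinear_simps algebra_simps)
  show "norm (b1op \<mu> x) \<le> norm x * (3 * norm \<mu>)" for x
    using b1op_norm[of \<mu> x] by (simp add: ac_simps)
qed

lemma b2op_linear: "bounded_linear (b2op \<mu>)"
proof (rule bounded_linear_intro[where K="4 * norm \<mu>"])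
  show "b2op \<mu> (x + y) = b2op \<mu> x + b2op \<mu> y" for x y
    by (auto intro!: blinfun_eqI simp: b2f_def blinfun.bilinear_simps algebra_simps)
  show "b2op \<mu> (r *\<^sub>R x) = r *\<^sub>R b2op \<mu> x" for r x
    by (auto intro!: blinfun_eqI simp: b2f_def blinfun.bilinear_simps algebra_simps)
  show "norm (b2op \<mu> x) \<le> norm x * (4 * norm \<mu>)" for x
    using b2op_norm[of \<mu> x] by (simp add: ac_simps)
qed

lemma hoch_b1_eq:
  assumes "\<And>x y. blinfun_apply (blinfun_apply \<mu> x) y = x * y"
  shows "hoch_b1 \<alpha> = b1op \<mu> \<alpha>"
proof -
  have "(\<lambda>a0 a1. a0 * blinfun_apply \<alpha> a1 - blinfun_apply \<alpha> (a0 * a1) + blinfun_apply \<alpha> a0 * a1) = b1f \<mu> \<alpha>"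
    by (intro ext) (simp add: b1f_def assms)
  then show ?thesis unfolding hoch_b1_def b1op_def c2_def by metis
qed

lemma hoch_b2_eq:
  assumes "\<And>x y. blinfun_apply (blinfun_apply \<mu> x) y = x * y"
  shows "hoch_b2 \<alpha> = b2op \<mu> \<alpha>"
proof -
  have "(\<lambda>a0 a1 a2. a0 * (\<alpha> a1 a2) - \<alpha> (a0 * a1) a2 + \<alpha> a0 (a1 * a2) - (\<alpha> a0 a1) * a2) = b2f \<mu> \<alpha>"
    by (intro ext) (simp add: b2f_def assms)
  then show ?thesis unfolding hoch_b2_def b2op_def c3_def c2_def by metis
qed

lemma b2b1_zero:
  fixes \<mu> :: "'a::real_normed_algebra cochain2"
  assumes assoc: "\<And>x y z. blinfun_apply (blinfun_apply \<mu> (blinfun_apply (blinfun_apply \<mu> x) y)) z = blinfun_apply (blinfun_apply \<mu> x) (blinfun_apply (blinfun_apply \<mu> y) z)"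
  shows "b2op \<mu> (b1op \<mu> \<alpha>) = 0"
  by (auto intro!: blinfun_eqI simp: b2f_def b1f_def blinfun.bilinear_simps assoc algebra_simps)

lemma mvt_vec:
  fixes f :: "real \<Rightarrow> 'b::real_normed_vector"
  assumes "convex S"
    and "\<And>x. x \<in> S \<Longrightarrow> (f has_vector_derivative f' x) (at x within S)"
    and "\<And>x. x \<in> S \<Longrightarrow> norm (f' x) \<le> B"
    and "x \<in> S" "y \<in> S"
  shows "norm (f x - f y) \<le> B * \<bar>x - y\<bar>"
proof -
  have "norm (f x - f y) \<le> B * norm (x - y)"
  proof (rule differentiable_bound[OF assms(1), where f'="\<lambda>x h. h *\<^sub>R f' x"])
    show "(f has_derivative (\<lambda>h. h *\<^sub>R f' x)) (at x within S)" if "x \<in> S" for x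
      using assms(2)[OF that] by (simp add: has_vector_derivative_def)
    show "onorm (\<lambda>h. h *\<^sub>R f' x) \<le> B" if "x \<in> S" for x
    proof (rule onorm_le)
      fix h :: real
      have "\<bar>h\<bar> * norm (f' x) \<le> \<bar>h\<bar> * B"
        using assms(3)[OF that] by (intro mult_left_mono) auto
      then show "norm (h *\<^sub>R f' x) \<le> B * norm h"
        by (simp add: mult.commute)
    qed
  qed (use assms in auto)
  then show ?thesis by simp
qed

lemma neumann:
  fixes T :: "'v::banach \<Rightarrow> 'v"
  assumes bl: "bounded_linear T" and bd: "\<And>x. norm (T x) \<le> q * norm x"
    and q: "0 \<le> q" "q < 1"
  shows "summable (\<lambda>n. (T ^^ n) z)"
    and "(\<Sum>n. (T ^^ n) z) - T (\<Sum>n. (T ^^ n) z) = z"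
proof -
  interpret bounded_linear T by fact
  have nb: "norm ((T ^^ n) z) \<le> q ^ n * norm z" for n
  proof (induction n)
    case (Suc n)
    have "norm ((T ^^ Suc n) z) \<le> q * norm ((T ^^ n) z)" using bd by simp
    also have "\<dots> \<le> q * (q ^ n * norm z)" using Suc q by (intro mult_left_mono) auto
    finally show ?case by simp
  qed simp
  show sm: "summable (\<lambda>n. (T ^^ n) z)"
    by (rule summable_comparison_test'[where N=0 and g="\<lambda>n. q ^ n * norm z"])
       (use nb q in \<open>auto intro!: summable_mult2 summable_geometric\<close>)
  have "T (\<Sum>n. (T ^^ n) z) = (\<Sum>n. T ((T ^^ n) z))" by (rule suminf[OF sm])
  also have "\<dots> = (\<Sum>n. (T ^^ Suc n) z)" by simp
  also have "\<dots> = (\<Sum>n. (T ^^ n) z) - z" using suminf_split_head[OF sm] by simp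
  finally show "(\<Sum>n. (T ^^ n) z) - T (\<Sum>n. (T ^^ n) z) = z" by simp
qed

lemma ode_exists:
  fixes Y :: "real \<Rightarrow> ('v::banach \<Rightarrow>\<^sub>L 'v)"
  assumes d: "0 < d" and contY: "continuous_on {-d..d} Y"
    and bY: "\<And>s. s \<in> {-d..d} \<Longrightarrow> norm (Y s) \<le> K"
    and small: "d * K < 1"
  shows "\<exists>H. H 0 = id_blinfun \<and> (\<forall>t \<in> {-d<..<d}. (H has_vector_derivative (H t o\<^sub>L Y t)) (at t))
            \<and> (\<exists>B. \<forall>t. norm (H t) \<le> B) \<and> continuous_on UNIV H"
proof -
  have K0: "0 \<le> K" using bY[of 0] d by (auto intro: order_trans[OF norm_ge_zero])
  define cl where "cl t = max (-d) (min d t)" for t :: real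
  have cl_in: "cl t \<in> {-d..d}" for t using d by (auto simp: cl_def)
  have cl_id: "t \<in> {-d..d} \<Longrightarrow> cl t = t" for t by (auto simp: cl_def)
  have cl_cont: "continuous_on UNIV cl" unfolding cl_def by (intro continuous_intros)
  have cl_abs: "\<bar>cl t\<bar> \<le> d" for t using cl_in[of t] by auto
  define J where "J u \<tau> = integral {-d..\<tau>} (\<lambda>s. u s o\<^sub>L Y s)" for u :: "real \<Rightarrow> ('v \<Rightarrow>\<^sub>L 'v)" and \<tau>
  have Jder: "(J u has_vector_derivative (u \<tau> o\<^sub>L Y \<tau>)) (at \<tau> within {-d..d})"
    if "continuous_on {-d..d} u" "\<tau> \<in> {-d..d}" for u \<tau>
    unfolding J_def
    by (rule integral_has_vector_derivative) (use that contY in \<open>auto intro!: continuous_intros\<close>)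
  have Jcont: "continuous_on {-d..d} (J u)" if "continuous_on {-d..d} u" for u
    using Jder[OF that] unfolding continuous_on_eq_continuous_within
    using has_vector_derivative_continuous by blast
  define Tf where "Tf u t = id_blinfun + J (apply_bcontfun u) (cl t) - J (apply_bcontfun u) 0"
    for u :: "real \<Rightarrow>\<^sub>C ('v \<Rightarrow>\<^sub>L 'v)" and t
  have Tf_bc: "Tf u \<in> bcontfun" for u
  proof -
    have cu: "continuous_on {-d..d} (J (apply_bcontfun u))" by (rule Jcont) simp
    obtain B where B: "\<And>x. x \<in> {-d..d} \<Longrightarrow> norm (J (apply_bcontfun u) x) \<le> B"
      using continuous_on_compact_bound[OF compact_Icc cu] by metis
    have c: "continuous_on UNIV (\<lambda>t. J (apply_bcontfun u) (cl t))"
      by (rule continuous_on_compose2[OF cu cl_cont]) (use cl_in in auto)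
    show ?thesis
    proof (rule bcontfun_normI)
      show "continuous_on UNIV (Tf u)" unfolding Tf_def by (intro continuous_intros c)
      show "norm (Tf u x) \<le> 1 + B + B" for x
      proof -
        have "norm (Tf u x) \<le> norm (id_blinfun::'v\<Rightarrow>\<^sub>L'v) + norm (J (apply_bcontfun u) (cl x)) + norm (J (apply_bcontfun u) 0)"
          unfolding Tf_def by (meson norm_triangle_ineq norm_triangle_ineq4 add_mono order_trans order_refl)
        moreover have "norm (id_blinfun::'v\<Rightarrow>\<^sub>L'v) \<le> 1" by (rule norm_blinfun_id_le)
        moreover have "norm (J (apply_bcontfun u) (cl x)) \<le> B" by (rule B[OF cl_in])
        moreover have "norm (J (apply_bcontfun u) 0) \<le> B" using d by (intro B) auto
        ultimately show ?thesis by linarith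
      qed
    qed
  qed
  define T where "T u = Bcontfun (Tf u)" for u
  have T_apply: "apply_bcontfun (T u) = Tf u" for u
    unfolding T_def using Tf_bc by (simp add: Bcontfun_inverse)
  have contr: "dist (T u) (T v) \<le> (d * K) * dist u v" for u v
  proof (rule dist_bound)
    fix t
    define G where "G \<tau> = J (apply_bcontfun u) \<tau> - J (apply_bcontfun v) \<tau>" for \<tau>
    have Gder: "(G has_vector_derivative ((u \<tau> - v \<tau>) o\<^sub>L Y \<tau>)) (at \<tau> within {-d..d})"
      if "\<tau> \<in> {-d..d}" for \<tau>
      unfolding G_def
      using has_vector_derivative_diff[OF Jder[OF _ that] Jder[OF _ that]]
      by (simp add: blinfun.bilinear_simps bounded_bilinear.diff_left[OF bounded_bilinear_blinfun_compose])
    have Gb: "norm ((u \<tau> - v \<tau>) o\<^sub>L Y \<tau>) \<le> dist u v * K" if "\<tau> \<in> {-d..d}" for \<tau>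
    proof -
      have "norm ((u \<tau> - v \<tau>) o\<^sub>L Y \<tau>) \<le> norm (u \<tau> - v \<tau>) * norm (Y \<tau>)" by (rule norm_blinfun_compose)
      also have "\<dots> \<le> dist u v * K"
        using dist_bounded[of u \<tau> v] bY[OF that] by (intro mult_mono) (auto simp: dist_norm)
      finally show ?thesis .
    qed
    have "norm (G (cl t) - G 0) \<le> (dist u v * K) * \<bar>cl t - 0\<bar>"
      by (rule mvt_vec[OF _ Gder Gb]) (use cl_in d in auto)
    also have "\<dots> \<le> (dist u v * K) * d" using cl_abs[of t] K0 by (intro mult_left_mono) auto
    finally have "norm (G (cl t) - G 0) \<le> d * K * dist u v" by (simp add: ac_simps)
    moreover have "dist (T u t) (T v t) = norm (G (cl t) - G 0)"
      by (simp add: T_apply Tf_def G_def dist_norm algebra_simps)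
    ultimately show "dist (T u t) (T v t) \<le> d * K * dist u v" by simp
  qed
  obtain u where u: "T u = u"
    using banach_fix_type[of "d * K" T] contr d K0 small by auto
  define H where "H = apply_bcontfun u"
  have Hf: "H t = Tf u t" for t unfolding H_def by (metis T_apply u)
  show ?thesis
  proof (intro exI[of _ H] conjI ballI)
    show "H 0 = id_blinfun" using d by (simp add: Hf Tf_def cl_id)
    show "\<exists>B. \<forall>t. norm (H t) \<le> B" unfolding H_def using norm_bounded by blast
    show "continuous_on UNIV H" unfolding H_def by simp
    fix t assume t: "t \<in> {-d<..<d}"
    have "((\<lambda>s. id_blinfun + J H s - J H 0) has_vector_derivative (H t o\<^sub>L Y t)) (at t within {-d..d})"
      using Jder[of H t] t unfolding H_def by (auto intro!: derivative_eq_intros)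
    then have "((\<lambda>s. id_blinfun + J H s - J H 0) has_vector_derivative (H t o\<^sub>L Y t)) (at t within {-d<..<d})"
      by (rule has_vector_derivative_within_subset) auto
    then have hd: "((\<lambda>s. id_blinfun + J H s - J H 0) has_vector_derivative (H t o\<^sub>L Y t)) (at t)"
      by (rule has_vector_derivative_within_open[OF t open_greaterThanLessThan, THEN iffD1])
    have eqs: "id_blinfun + J H y - J H 0 = H y" if "y \<in> {-d<..<d}" for y
    proof -
      have "H y = Tf u y" by (rule Hf)
      also have "\<dots> = id_blinfun + J H y - J H 0"
        unfolding Tf_def H_def[symmetric] using that by (simp add: cl_id)
      finally show ?thesis by simp
    qed
    show "(H has_vector_derivative (H t o\<^sub>L Y t)) (at t)"
      by (rule has_vector_derivative_transform_within_open[OF hd open_greaterThanLessThan t eqs])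
  qed
qed

lemma deriv_app1:
  fixes H :: "real \<Rightarrow> ('b::real_normed_vector \<Rightarrow>\<^sub>L 'c::real_normed_vector)"
  assumes "(H has_vector_derivative H') (at t within S)" "(p has_vector_derivative p') (at t within S)"
  shows "((\<lambda>s. blinfun_apply (H s) (p s)) has_vector_derivative (blinfun_apply (H t) p' + blinfun_apply H' (p t))) (at t within S)"
  by (rule bounded_bilinear.has_vector_derivative[OF bounded_bilinear_blinfun_apply assms])

lemma deriv_at_pt:
  fixes H :: "real \<Rightarrow> ('b::real_normed_vector \<Rightarrow>\<^sub>L 'c::real_normed_vector)"
  assumes "(H has_vector_derivative H') (at t within S)"
  shows "((\<lambda>s. blinfun_apply (H s) x) has_vector_derivative (blinfun_apply H' x)) (at t within S)"
  using deriv_app1[OF assms has_vector_derivative_const[of x]] by simp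

lemma cocycle_D:
  fixes m :: "real \<Rightarrow> 'a::real_normed_algebra cochain2"
  assumes I: "open I" "t \<in> I"
    and assoc: "\<forall>s\<in>I. \<forall>x y z. m s (m s x y) z = m s x (m s y z)"
    and der: "\<forall>s\<in>I. (m has_vector_derivative D s) (at s)"
  shows "b2op (m t) (D t) = 0"
proof (intro blinfun_eqI)
  fix x y z
  have dt: "(m has_vector_derivative D t) (at t)" using der I by auto
  have mxy: "((\<lambda>s. m s x y) has_vector_derivative D t x y) (at t)"
    by (rule deriv_at_pt[OF deriv_at_pt[OF dt]])
  have myz: "((\<lambda>s. m s y z) has_vector_derivative D t y z) (at t)"
    by (rule deriv_at_pt[OF deriv_at_pt[OF dt]])
  have d1: "((\<lambda>s. m s (m s x y) z) has_vector_derivative (m t (D t x y) z + D t (m t x y) z)) (at t)"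
    using deriv_at_pt[OF deriv_app1[OF dt mxy], of z] by (simp add: blinfun.add_left)
  have d2: "((\<lambda>s. m s x (m s y z)) has_vector_derivative (m t x (D t y z) + D t x (m t y z))) (at t)"
    using deriv_app1[OF deriv_at_pt[OF dt, of x] myz] by simp
  have d2': "((\<lambda>s. m s (m s x y) z) has_vector_derivative (m t x (D t y z) + D t x (m t y z))) (at t)"
    by (rule has_vector_derivative_transform_within_open[OF d2 I]) (use assoc in auto)
  have "m t (D t x y) z + D t (m t x y) z = m t x (D t y z) + D t x (m t y z)"
    by (rule vector_derivative_unique_at[OF d1 d2'])
  then show "blinfun_apply (blinfun_apply (blinfun_apply (b2op (m t) (D t)) x) y) z =
             blinfun_apply (blinfun_apply (blinfun_apply 0 x) y) z"
    by (simp add: b2f_def algebra_simps)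
qed

lemma norm3: "norm (a + b + c) \<le> norm a + norm b + norm (c::'v::real_normed_vector)"
  using norm_triangle_ineq[of "a+b" c] norm_triangle_ineq[of a b] by linarith

lemma frac_half: "0 \<le> (x::real) \<Longrightarrow> 1 / (2 * (x + 1)) * x \<le> 1/2"
  by (simp add: field_simps)

theorem mainTheorem13:
  fixes h :: "('a::{real_normed_algebra,banach}) cochain2 \<Rightarrow> 'a cochain1"
    and g :: "'a cochain3 \<Rightarrow> 'a cochain2"
  assumes "bounded_linear h" and "bounded_linear g"
    and "\<forall>\<alpha>. hoch_b1 (h \<alpha>) + g (hoch_b2 \<alpha>) = \<alpha>"
    and "C1_deformation I m"
  shows "\<exists>\<epsilon>>0. {-\<epsilon><..<\<epsilon>} \<subseteq> I \<and>
           (\<exists>H :: real \<Rightarrow> 'a cochain1.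
              H C1_differentiable_on {-\<epsilon><..<\<epsilon>} \<and> H 0 = id_blinfun \<and>
              (\<forall>t. \<bar>t\<bar> < \<epsilon> \<longrightarrow>
                 bij (blinfun_apply (H t)) \<and>
                 (\<forall>x y. H t (m t x y) = H t x * H t y)))"
proof -
  note hl = assms(1) and gl = assms(2)
  interpret h: bounded_linear h by (rule hl)
  interpret g: bounded_linear g by (rule gl)
  have openI: "open I" and zI: "0 \<in> I"
    and assoc: "\<forall>t\<in>I. \<forall>x y z. m t (m t x y) z = m t x (m t y z)"
    and m0: "\<And>x y. m 0 x y = x * y" and C1: "m C1_differentiable_on I"
    using assms(4) unfolding C1_deformation_def by auto
  obtain D where der: "\<forall>s\<in>I. (m has_vector_derivative D s) (at s)" and contD: "continuous_on I D"
    using C1 unfolding C1_differentiable_on_def by blast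
  have contm: "continuous_on I m"
    using der unfolding continuous_on_eq_continuous_within
    by (meson has_vector_derivative_continuous continuous_at_imp_continuous_within)
  have hyp: "b1op (m 0) (h X) + g (b2op (m 0) X) = X" for X
    using assms(3) hoch_b1_eq[of "m 0", OF m0] hoch_b2_eq[of "m 0", OF m0] by metis
  have cocD: "b2op (m t) (D t) = 0" if "t \<in> I" for t
    by (rule cocycle_D[OF openI that assoc der])
  obtain Kh where Kh: "Kh > 0" "\<And>x. norm (h x) \<le> norm x * Kh" using h.pos_bounded by blast
  obtain Kg where Kg: "Kg > 0" "\<And>x. norm (g x) \<le> norm x * Kg" using g.pos_bounded by blast
  define Cst where "Cst = 3 * Kh + 4 * Kg"
  have Cst: "Cst > 0" using Kh Kg by (simp add: Cst_def)
  define Q where "Q \<nu> X = b1op \<nu> (h X) + g (b2op \<nu> X)" for \<nu> X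
  have Qb: "norm (Q \<nu> X) \<le> Cst * norm \<nu> * norm X" for \<nu> X
  proof -
    have 1: "norm (b1op \<nu> (h X)) \<le> 3 * Kh * norm \<nu> * norm X"
    proof -
      have "norm (b1op \<nu> (h X)) \<le> 3 * norm \<nu> * norm (h X)" by (rule b1op_norm)
      also have "\<dots> \<le> 3 * norm \<nu> * (norm X * Kh)" by (intro mult_left_mono Kh) auto
      finally show ?thesis by (simp add: ac_simps)
    qed
    have 2: "norm (g (b2op \<nu> X)) \<le> 4 * Kg * norm \<nu> * norm X"
    proof -
      have "norm (g (b2op \<nu> X)) \<le> norm (b2op \<nu> X) * Kg" by (rule Kg)
      also have "\<dots> \<le> (4 * norm \<nu> * norm X) * Kg" using Kg by (intro mult_right_mono b2op_norm) auto
      finally show ?thesis by (simp add: ac_simps)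
    qed
    have "norm (Q \<nu> X) \<le> norm (b1op \<nu> (h X)) + norm (g (b2op \<nu> X))"
      unfolding Q_def by (rule norm_triangle_ineq)
    also have "\<dots> \<le> Cst * norm \<nu> * norm X" using 1 2 by (simp add: Cst_def algebra_simps)
    finally show ?thesis .
  qed
  have Qdiff: "Q (\<nu>1 - \<nu>2) X = Q \<nu>1 X - Q \<nu>2 X" for \<nu>1 \<nu>2 X
    by (simp add: Q_def b1op_diff_mu b2op_diff_mu g.diff)
  have Qlin: "bounded_linear (Q \<nu>)" for \<nu>
    unfolding Q_def
    by (intro bounded_linear_add bounded_linear_compose[OF b1op_linear hl]
          bounded_linear_compose[OF gl b2op_linear])
  define R where "R t = Q (m 0 - m t)" for t
  have Rid: "R t X = X - b1op (m t) (h X) - g (b2op (m t) X)" for t X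
    using hyp[of X] unfolding R_def Qdiff by (simp add: Q_def algebra_simps)
  have Rdiff: "R t X - R s X = Q (m s - m t) X" for t s X
    unfolding R_def Qdiff[symmetric] by (simp add: algebra_simps)
  have Rlin: "bounded_linear (R t)" for t unfolding R_def by (rule Qlin)
  have "isCont m 0" using contm openI zI by (simp add: continuous_on_eq_continuous_at)
  moreover have "1 / (2 * Cst) > 0" using Cst by simp
  ultimately have "\<exists>\<delta>>0. \<forall>x'. dist x' 0 < \<delta> \<longrightarrow> dist (m x') (m 0) < 1 / (2 * Cst)"
    unfolding continuous_at_eps_delta by blast
  then obtain e1 where e1: "e1 > 0" "\<And>t. dist t 0 < e1 \<Longrightarrow> dist (m t) (m 0) < 1 / (2 * Cst)"
    by blast
  obtain e2 where e2: "e2 > 0" "ball 0 e2 \<subseteq> I" using openI zI open_contains_ball by blast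
  define \<delta>0 where "\<delta>0 = min e1 e2 / 2"
  have \<delta>0: "\<delta>0 > 0" "\<delta>0 < e1" "\<delta>0 < e2" using e1 e2 by (auto simp: \<delta>0_def)
  define S0 where "S0 = {-\<delta>0..\<delta>0}"
  have S0I: "S0 \<subseteq> I"
  proof
    fix x assume "x \<in> S0"
    then have "x \<in> ball 0 e2" using \<delta>0 by (auto simp: S0_def dist_real_def)
    then show "x \<in> I" using e2 by blast
  qed
  have mclose: "norm (m 0 - m t) \<le> 1 / (2 * Cst)" if "t \<in> S0" for t
  proof -
    have "\<bar>t\<bar> < e1" using that \<delta>0 by (auto simp: S0_def)
    then have "dist (m t) (m 0) < 1 / (2 * Cst)" using e1(2)[of t] by (simp add: dist_real_def)
    then show ?thesis by (simp add: dist_norm norm_minus_commute)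
  qed
  have Rsmall: "norm (R t X) \<le> 1/2 * norm X" if "t \<in> S0" for t X
  proof -
    have "norm (R t X) \<le> Cst * norm (m 0 - m t) * norm X" unfolding R_def by (rule Qb)
    also have "\<dots> \<le> Cst * (1 / (2 * Cst)) * norm X"
      using mclose[OF that] Cst by (intro mult_right_mono mult_left_mono) auto
    finally show ?thesis using Cst by simp
  qed
  define E where "E t = (\<Sum>n. (R t ^^ n) (D t))" for t
  have Esum: "summable (\<lambda>n. (R t ^^ n) (D t))" and Eeq: "E t - R t (E t) = D t" if "t \<in> S0" for t
    using neumann[OF Rlin Rsmall[OF that], of "D t"] unfolding E_def by auto
  have assoc_t: "\<And>x y z. m t (m t x y) z = m t x (m t y z)" if "t \<in> S0" for t
    using assoc S0I that by auto
  have cocE: "b2op (m t) (E t) = 0" if t: "t \<in> S0" for t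
  proof -
    interpret b2: bounded_linear "b2op (m t)" by (rule b2op_linear)
    have "b2op (m t) ((R t ^^ n) (D t)) = 0" for n
    proof (induction n)
      case 0 then show ?case using cocD S0I t by auto
    next
      case (Suc n)
      then show ?case
        using b2b1_zero[of "m t", OF assoc_t[OF t]]
        by (simp add: Rid b2.diff g.zero)
    qed
    then show ?thesis unfolding E_def using b2.suminf[OF Esum[OF t]] by simp
  qed
  define Y where "Y t = h (E t)" for t
  have bY: "b1op (m t) (Y t) = D t" if t: "t \<in> S0" for t
    using Eeq[OF t] Rid[of t "E t"] cocE[OF t] g.zero by (simp add: Y_def)
  have Ediff: "norm (E t - E s) \<le> 2 * (norm (D t - D s) + Cst * norm (m s - m t) * norm (E s))"
    if t: "t \<in> S0" and s: "s \<in> S0" for t s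
  proof -
    interpret Rt: bounded_linear "R t" by (rule Rlin)
    have "E t - E s = (D t - D s) + R t (E t - E s) + Q (m s - m t) (E s)"
      unfolding Rt.diff Rdiff[symmetric] Eeq[OF t, symmetric] Eeq[OF s, symmetric] by (simp add: algebra_simps)
    then have "norm (E t - E s) \<le> norm (D t - D s) + norm (R t (E t - E s)) + norm (Q (m s - m t) (E s))"
      by (metis norm3)
    also have "\<dots> \<le> norm (D t - D s) + 1/2 * norm (E t - E s) + Cst * norm (m s - m t) * norm (E s)"
      using Rsmall[OF t] Qb by (intro add_mono) auto
    finally have "norm (E t - E s) \<le> norm (D t - D s) + 1 / 2 * norm (E t - E s) + Cst * norm (m s - m t) * norm (E s)" .
    then show ?thesis unfolding distrib_left by linarith
  qed
  have contE: "continuous_on S0 E"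
    unfolding continuous_on_def
  proof safe
    fix s assume s: "s \<in> S0"
    have "((\<lambda>t. E t - E s) \<longlongrightarrow> 0) (at s within S0)"
    proof (rule Lim_null_comparison)
      show "\<forall>\<^sub>F t in at s within S0. norm (E t - E s) \<le> 2 * (norm (D t - D s) + Cst * norm (m s - m t) * norm (E s))"
        using Ediff s by (auto simp: eventually_at_filter)
      have cD: "(D \<longlongrightarrow> D s) (at s within S0)" and cm: "(m \<longlongrightarrow> m s) (at s within S0)"
        using contD contm S0I s
        by (meson continuous_on_def continuous_on_subset subsetD)+
      have "((\<lambda>t. 2 * (norm (D t - D s) + Cst * norm (m s - m t) * norm (E s))) \<longlongrightarrow>
             2 * (norm (D s - D s) + Cst * norm (m s - m s) * norm (E s))) (at s within S0)"
        by (intro tendsto_intros cD cm)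
      then show "((\<lambda>t. 2 * (norm (D t - D s) + Cst * norm (m s - m t) * norm (E s))) \<longlongrightarrow> 0) (at s within S0)"
        by simp
    qed
    then show "(E \<longlongrightarrow> E s) (at s within S0)" by (rule LIM_zero_cancel)
  qed
  have contY: "continuous_on S0 Y" unfolding Y_def by (rule h.continuous_on[OF contE])
  have cS0: "compact S0" by (simp add: S0_def)
  obtain K where K: "K \<ge> 0" "\<And>s. s \<in> S0 \<Longrightarrow> norm (Y s) \<le> K"
    using continuous_on_compact_bound[OF cS0 contY] by metis
  obtain Bm where Bm: "Bm \<ge> 0" "\<And>s. s \<in> S0 \<Longrightarrow> norm (m s) \<le> Bm"
    using continuous_on_compact_bound[OF cS0 continuous_on_subset[OF contm S0I]] by metis
  define d where "d = min (\<delta>0/2) (1 / (2 * (K + 1)))"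
  have d: "d > 0" "d < \<delta>0" "d \<le> 1 / (2 * (K + 1))" using \<delta>0 K by (auto simp: d_def)
  have dK: "d * K < 1"
  proof -
    have "d * K \<le> 1 / (2 * (K + 1)) * K" using d K by (intro mult_right_mono) auto
    also have "\<dots> < 1" using K by (simp add: field_simps)
    finally show ?thesis .
  qed
  have dS0: "{-d..d} \<subseteq> S0" using d by (auto simp: S0_def)
  obtain H where H0: "H 0 = id_blinfun"
    and Hder: "\<forall>t \<in> {-d<..<d}. (H has_vector_derivative (H t o\<^sub>L Y t)) (at t)"
    and HB: "\<exists>B. \<forall>t. norm (H t) \<le> B" and contH: "continuous_on UNIV H"
    using ode_exists[OF d(1) continuous_on_subset[OF contY dS0] K(2) dK] dS0 by blast
  obtain BH where BH: "\<And>t. norm (H t) \<le> BH" using HB by blast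
  have BH0: "BH \<ge> 0" using BH[of 0] norm_ge_zero order_trans by blast
  define \<epsilon> where "\<epsilon> = min (d/2) (min (1 / (2 * (BH * K + 1))) (1 / (4 * (K + 1))))"
  have \<epsilon>: "\<epsilon> > 0" "\<epsilon> < d" "\<epsilon> \<le> 1 / (2 * (BH * K + 1))" "\<epsilon> \<le> 1 / (4 * (K + 1))"
  proof -
    have "0 \<le> BH * K" using BH0 K by simp
    then have p: "0 < 2 * (BH * K + 1)" unfolding distrib_left by linarith
    have p2: "0 < 4 * (K + 1)" using K unfolding distrib_left by linarith
    show "\<epsilon> > 0" using d p p2 unfolding \<epsilon>_def by simp
    show "\<epsilon> < d" "\<epsilon> \<le> 1 / (2 * (BH * K + 1))" "\<epsilon> \<le> 1 / (4 * (K + 1))"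
      using d unfolding \<epsilon>_def by auto
  qed
  have eBK: "\<epsilon> * (BH * K) \<le> 1/2"
  proof -
    have "\<epsilon> * (BH * K) \<le> 1 / (2 * (BH * K + 1)) * (BH * K)"
      using \<epsilon> BH0 K by (intro mult_right_mono) auto
    also have "\<dots> \<le> 1/2" using BH0 K by (intro frac_half) simp
    finally show ?thesis .
  qed
  have eK: "2 * K * \<epsilon> \<le> 1/2"
  proof -
    have "\<epsilon> * K \<le> 1 / (4 * (K + 1)) * K"
      using \<epsilon> K by (intro mult_right_mono) auto
    also have "\<dots> \<le> 1/4" using K by (simp add: field_simps)
    finally show ?thesis by (simp add: ac_simps)
  qed
  define S1 where "S1 = {-\<epsilon>..\<epsilon>}"
  have S1d: "S1 \<subseteq> {-d<..<d}" using \<epsilon> by (auto simp: S1_def)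
  have dS0': "{-d<..<d} \<subseteq> S0" using dS0 by auto
  have HderS1: "(H has_vector_derivative (H r o\<^sub>L Y r)) (at r within S1)" if "r \<in> S1" for r
    using Hder S1d that by (auto intro: has_vector_derivative_at_within)
  have HYb: "norm (H r o\<^sub>L Y r) \<le> BH * K" if "r \<in> S1" for r
  proof -
    have "norm (H r o\<^sub>L Y r) \<le> norm (H r) * norm (Y r)" by (rule norm_blinfun_compose)
    also have "\<dots> \<le> BH * K" using BH K(2)[of r] that S1d dS0' BH0 by (intro mult_mono) auto
    finally show ?thesis .
  qed
  have Hclose: "norm (H t x - x) \<le> 1/2 * norm x" if t: "t \<in> S1" for t x
  proof -
    have "norm (H t - H 0) \<le> (BH * K) * \<bar>t - 0\<bar>"
      by (rule mvt_vec[OF _ HderS1 HYb]) (use t \<epsilon> in \<open>auto simp: S1_def\<close>)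
    also have "\<dots> \<le> (BH * K) * \<epsilon>" using t BH0 K by (intro mult_left_mono) (auto simp: S1_def)
    also have "\<dots> \<le> 1/2" using eBK by (simp add: ac_simps)
    finally have n: "norm (H t - id_blinfun) \<le> 1/2" using H0 by simp
    have "norm (H t x - x) = norm ((H t - id_blinfun) x)" by (simp add: blinfun.diff_left)
    also have "\<dots> \<le> norm (H t - id_blinfun) * norm x" by (rule norm_blinfun)
    also have "\<dots> \<le> 1/2 * norm x" using n by (intro mult_right_mono) auto
    finally show ?thesis .
  qed
  have Hbij: "bij (blinfun_apply (H t))" if t: "t \<in> S1" for t
  proof (rule bijI)
    show "inj (blinfun_apply (H t))"
    proof (rule injI)
      fix x y assume "H t x = H t y"
      then have "H t (x - y) = 0" by (simp add: blinfun.diff_right)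
      then have "norm (x - y) \<le> 1/2 * norm (x - y)" using Hclose[OF t, of "x - y"] by (simp add: norm_minus_commute)
      then show "x = y" by simp
    qed
    show "surj (blinfun_apply (H t))"
    proof (rule surjI)
      fix z
      define T where "T x = x - H t x" for x
      have Tl: "bounded_linear T" unfolding T_def
        by (intro bounded_linear_sub bounded_linear_ident blinfun.bounded_linear_right)
      have Tb: "norm (T x) \<le> 1/2 * norm x" for x
        using Hclose[OF t, of x] by (simp add: T_def norm_minus_commute)
      have "(\<Sum>n. (T ^^ n) z) - T (\<Sum>n. (T ^^ n) z) = z"
        by (rule neumann(2)[OF Tl Tb]) auto
      then show "H t (\<Sum>n. (T ^^ n) z) = z" by (simp add: T_def)
    qed
  qed
  define Er where "Er s x y = H s (m s x y) - H s x * H s y" for s x y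
  have Er_der: "((\<lambda>s. Er s x y) has_vector_derivative (Er r (Y r x) y + Er r x (Y r y))) (at r within S1)"
    if r: "r \<in> S1" for r x y
  proof -
    have rd: "r \<in> {-d<..<d}" using r S1d by auto
    have rS0: "r \<in> S0" using rd dS0' by auto
    have dH: "(H has_vector_derivative (H r o\<^sub>L Y r)) (at r)" using Hder rd by auto
    have dm: "(m has_vector_derivative D r) (at r)" using der rS0 S0I by auto
    have dmxy: "((\<lambda>s. m s x y) has_vector_derivative D r x y) (at r)"
      by (rule deriv_at_pt[OF deriv_at_pt[OF dm]])
    have d1: "((\<lambda>s. H s (m s x y)) has_vector_derivative (H r (D r x y) + (H r o\<^sub>L Y r) (m r x y))) (at r)"
      by (rule deriv_app1[OF dH dmxy])
    have d3: "((\<lambda>s. H s x * H s y) has_vector_derivative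
               (H r x * (H r o\<^sub>L Y r) y + (H r o\<^sub>L Y r) x * H r y)) (at r)"
      by (rule has_vector_derivative_mult[OF deriv_at_pt[OF dH] deriv_at_pt[OF dH]])
    have Dxy: "D r x y = m r x (Y r y) - Y r (m r x y) + m r (Y r x) y"
      using bY[OF rS0] by (metis b1op_apply b1f_def)
    have "((\<lambda>s. Er s x y) has_vector_derivative (Er r (Y r x) y + Er r x (Y r y))) (at r)"
      unfolding Er_def
      by (rule has_vector_derivative_eq_rhs[OF has_vector_derivative_diff[OF d1 d3]])
         (simp add: Dxy blinfun.diff_right blinfun.add_right algebra_simps)
    then show ?thesis by (rule has_vector_derivative_at_within)
  qed
  define B0 where "B0 = BH * Bm + BH * BH"
  have B0: "B0 \<ge> 0" using BH0 Bm by (simp add: B0_def)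
  have Er0: "Er 0 x y = 0" for x y using H0 m0 by (simp add: Er_def)
  have Pn: "\<forall>s\<in>S1. \<forall>x y. norm (Er s x y) \<le> B0 * (1/2)^n * norm x * norm y" for n
  proof (induction n)
    case 0
    show ?case
    proof (intro ballI allI)
      fix s x y assume s: "s \<in> S1"
      have sS0: "s \<in> S0" using s S1d dS0' by auto
      have a: "norm (H s (m s x y)) \<le> BH * Bm * norm x * norm y"
      proof -
        have "norm (H s (m s x y)) \<le> norm (H s) * norm (m s x y)" by (rule norm_blinfun)
        also have "\<dots> \<le> BH * (Bm * norm x * norm y)"
        proof (intro mult_mono BH)
          have "norm (m s x y) \<le> norm (m s) * norm x * norm y" by (rule nb2)
          also have "\<dots> \<le> Bm * norm x * norm y" using Bm(2)[OF sS0] by (intro mult_right_mono) auto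
          finally show "norm (m s x y) \<le> Bm * norm x * norm y" .
        qed (use BH0 in auto)
        finally show ?thesis by (simp add: ac_simps)
      qed
      have b: "norm (H s x * H s y) \<le> BH * BH * norm x * norm y"
      proof -
        have "norm (H s x * H s y) \<le> norm (H s x) * norm (H s y)" by (rule norm_mult_ineq)
        also have "\<dots> \<le> (BH * norm x) * (BH * norm y)"
        proof (intro mult_mono)
          show "norm (H s x) \<le> BH * norm x"
            using norm_blinfun[of "H s" x] BH[of s] by (meson mult_right_mono norm_ge_zero order_trans)
          show "norm (H s y) \<le> BH * norm y"
            using norm_blinfun[of "H s" y] BH[of s] by (meson mult_right_mono norm_ge_zero order_trans)
        qed (use BH0 in auto)
        finally show ?thesis by (simp add: ac_simps)
      qed
      have "norm (Er s x y) \<le> norm (H s (m s x y)) + norm (H s x * H s y)"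
        unfolding Er_def by (rule norm_triangle_ineq4)
      also have "\<dots> \<le> B0 * norm x * norm y" using a b by (simp add: B0_def algebra_simps)
      finally show "norm (Er s x y) \<le> B0 * (1/2)^0 * norm x * norm y" by simp
    qed
  next
    case (Suc n)
    define c where "c = B0 * (1/2)^n"
    have c0: "c \<ge> 0" using B0 by (simp add: c_def)
    have IH: "\<And>s x y. s \<in> S1 \<Longrightarrow> norm (Er s x y) \<le> c * norm x * norm y"
      using Suc.IH by (simp add: c_def)
    show ?case
    proof (intro ballI allI)
      fix s x y assume s: "s \<in> S1"
      have fb: "norm (Er r (Y r x) y + Er r x (Y r y)) \<le> 2 * c * K * norm x * norm y" if r: "r \<in> S1" for r
      proof -
        have YK: "norm (Y r z) \<le> K * norm z" for z
          using norm_blinfun[of "Y r" z] K(2)[of r] r S1d dS0'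
          by (meson mult_right_mono norm_ge_zero order_trans subsetD)
        have a: "norm (Er r (Y r x) y) \<le> c * K * norm x * norm y"
        proof -
          have "norm (Er r (Y r x) y) \<le> c * norm (Y r x) * norm y" by (rule IH[OF r])
          also have "\<dots> \<le> c * (K * norm x) * norm y" using c0 YK by (intro mult_right_mono mult_left_mono) auto
          finally show ?thesis by (simp add: ac_simps)
        qed
        have b: "norm (Er r x (Y r y)) \<le> c * K * norm x * norm y"
        proof -
          have "norm (Er r x (Y r y)) \<le> c * norm x * norm (Y r y)" by (rule IH[OF r])
          also have "\<dots> \<le> c * norm x * (K * norm y)" using c0 YK by (intro mult_left_mono) auto
          finally show ?thesis by (simp add: ac_simps)
        qed
        show ?thesis using norm_triangle_ineq[of "Er r (Y r x) y" "Er r x (Y r y)"] a b by linarith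
      qed
      have "norm (Er s x y - Er 0 x y) \<le> (2 * c * K * norm x * norm y) * \<bar>s - 0\<bar>"
        by (rule mvt_vec[OF _ Er_der fb]) (use s \<epsilon> in \<open>auto simp: S1_def\<close>)
      also have "\<dots> \<le> (2 * c * K * norm x * norm y) * \<epsilon>"
        using s c0 K by (intro mult_left_mono) (auto simp: S1_def)
      also have "\<dots> = (2 * K * \<epsilon>) * (c * norm x * norm y)" by (simp add: ac_simps)
      also have "\<dots> \<le> 1/2 * (c * norm x * norm y)" using eK c0 by (intro mult_right_mono) auto
      finally show "norm (Er s x y) \<le> B0 * (1/2)^Suc n * norm x * norm y"
        by (simp add: Er0 c_def ac_simps)
    qed
  qed
  have Ermult: "H t (m t x y) = H t x * H t y" if t: "t \<in> S1" for t x y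
  proof -
    have lim: "(\<lambda>n. B0 * (1/2)^n * norm x * norm y) \<longlonglongrightarrow> B0 * 0 * norm x * norm y"
      by (intro tendsto_intros LIMSEQ_realpow_zero) auto
    have "norm (Er t x y) \<le> B0 * 0 * norm x * norm y"
      apply (rule LIMSEQ_le_const[OF lim])
      using Pn t by blast
    then have "norm (Er t x y) \<le> 0" by simp
    then show ?thesis by (simp add: Er_def)
  qed
  have eS1: "{-\<epsilon><..<\<epsilon>} \<subseteq> S1" by (auto simp: S1_def)
  show ?thesis
  proof (intro exI[of _ \<epsilon>] conjI exI[of _ H] allI impI)
    show "\<epsilon> > 0" by (rule \<epsilon>)
    show "{-\<epsilon><..<\<epsilon>} \<subseteq> I" using eS1 S1d dS0' S0I by blast
    show "H 0 = id_blinfun" by (rule H0)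
    show "H C1_differentiable_on {-\<epsilon><..<\<epsilon>}"
      unfolding C1_differentiable_on_def
    proof (intro exI[of _ "\<lambda>t. H t o\<^sub>L Y t"] conjI ballI)
      show "(H has_vector_derivative (H t o\<^sub>L Y t)) (at t)" if "t \<in> {-\<epsilon><..<\<epsilon>}" for t
        using Hder that \<epsilon> by auto
      have "continuous_on {-\<epsilon><..<\<epsilon>} Y"
        by (rule continuous_on_subset[OF contY]) (use eS1 S1d dS0' in blast)
      moreover have "continuous_on {-\<epsilon><..<\<epsilon>} H" by (rule continuous_on_subset[OF contH]) auto
      ultimately show "continuous_on {-\<epsilon><..<\<epsilon>} (\<lambda>t. H t o\<^sub>L Y t)"
        by (intro continuous_intros)
    qed
    fix t :: real assume t: "\<bar>t\<bar> < \<epsilon>"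
    then have tS1: "t \<in> S1" by (auto simp: S1_def)
    show "bij (blinfun_apply (H t))" by (rule Hbij[OF tS1])
    show "H t (m t x y) = H t x * H t y" for x y using Ermult[OF tS1] by blast
  qed
qed

end
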